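(* Let $G$ be the two-player game with $A_i=\{a_{i1},a_{i2},a_{i3}\}$ and fitness vectors (row $a_{1r}$, column $a_{2c}$): row 1: $(4,4),(2,2),(0,5)$; row 2: $(2,2),(4,4),(0,0)$; row 3: $(5,0),(0,0),(2,2)$. Let $\mu=\delta_{\theta_1}\times\delta_{\theta_2}$ where $\theta_1=\theta_2=\theta\in\mathbb{R}^A$ with $\theta(a_{11},a_{21})=\theta(a_{12},a_{22})=2$, $\theta(a_{11},a_{22})=\theta(a_{12},a_{21})=1$, and $\theta(a)=0$ for all other $a\in A$. Let $s_1(\theta_1)=s_2(\theta_2)=(1/2,1/2,0)$. Then $s$ is a Bayesian–Nash equilibrium of the no-observability game with distribution $\mu$, and the configuration $(\mu,s)$ is stable under no observability.
   Context: Preference types: $\Theta=\mathbb{R}^A$, $A=A_1\times A_2$ (utility functions on $A$, extended bilinearly to mixed profiles); $\pi_i$ likewise extended. $\mathcal{M}(\Theta^2)$: product distributions $\mu=\mu_1\times\mu_2$ with finitely supported marginals; $\mu_{-i}=\mu_j$ ($j\neq i$). Mutants: for nonempty $J\subseteq\{1,2\}$, a mutant sub-profile is $\tilde\theta_J\in\prod_{j\in J}(\Theta\setminus\operatorname{supp}\mu_j)$ with shares $\varepsilon\in(0,1)^{|J|}$, $\|\varepsilon\|=\max_j\varepsilon_j$; post-entry $\tilde\mu^\varepsilon_i=(1-\varepsilon_i)\mu_i+\varepsilon_i\delta_{\tilde\theta_i}$ for $i\in J$, $\tilde\mu^\varepsilon_i=\mu_i$ otherwise. No observability: a strategy of player $i$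 is $s_i:\operatorname{supp}\mu_i\to\Delta(A_i)$; $s$ is a Bayesian–Nash equilibrium if for each $i$ and $\theta_i\in\operatorname{supp}\mu_i$, $s_i(\theta_i)\in\arg\max_{\sigma_i\in\Delta(A_i)}\sum_{\theta'_{-i}}\mu_{-i}(\theta'_{-i})\theta_i(\sigma_i,s_{-i}(\theta'_{-i}))$; $B_0(\mu)$ is the set of these; $(\mu,s)$ is a configuration, with aggregate outcome $x(\mu,s)=\big(\sum_{\theta_i}\mu_i(\theta_i)s_i(\theta_i)\big)_{i}$. Average fitness: $\Pi_{\theta_i}(\mu;s)=\pi_i(s_i(\theta_i),x(\mu,s)_{-i})$. Balanced: all types in each $\operatorname{supp}\mu_i$ have equal average fitness. Nearby set: for $\eta\ge0$, $B_0^\eta(\tilde\mu^\varepsilon;s)=\{\tilde s\in B_0(\tilde\mu^\varepsilon):\max_{i}\|\tilde s_i(\theta_i)-s_i(\theta_i)\|\le\eta\ \forall\theta\in\operatorname{supp}\mu\}$ (Euclidean norm). $(\mu,s)$ is stable if it is balanced and for every nonempty $J$, every $\tilde\theta_J$ and every $\eta>0$ there exist $\bar\eta\in[0,\eta)$ and $\bar\epsilon\in(0,1)$ such that for every $\varepsilon$ with $\|\varepsilon\|\in(0,\bar\epsilon)$, $B_0^{\bar\eta}(\tilde\mu^\varepsilon;s)\neq\emptyset$ and every $\tilde s\in B_0^{\bar\eta}(\tilde\mu^\varepsilon;s)$ satisfies either (i) some $j\in J$ has $\Pi_{\theta_j}(\tilde\mu^\varepsilon;\tilde s)>\Pi_{\tilde\theta_j}(\tilde\mu^\varepsilon;\tilde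 s)$ for all $\theta_j\in\operatorname{supp}\mu_j$, or (ii) for every $i$ all types in $\operatorname{supp}\tilde\mu^\varepsilon_i$ have equal average fitness under $(\tilde\mu^\varepsilon,\tilde s)$. *)

theory Defs
  imports Complex_Main
begin

datatype act = A1 | A2 | A3

lemma UNIV_act: "(UNIV :: act set) = {A1, A2, A3}"
  using act.exhaust by auto

instance act :: finite
  by standard (simp add: UNIV_act)

datatype pl = P1 | P2

lemma UNIV_pl: "(UNIV :: pl set) = {P1, P2}"
  using pl.exhaust by auto

instance pl :: finite
  by standard (simp add: UNIV_pl)

fun other :: "pl \<Rightarrow> pl" where
  "other P1 = P2"
| "other P2 = P1"

type_synonym mixed = "act \<Rightarrow> real"
(* a preference type theta in R^A, A = A_1 x A_2; argument is the profile (a_1, a_2) *)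
type_synonym ptype = "act \<times> act \<Rightarrow> real"
(* mu i = marginal distribution of player i's types (finitely supported weights) *)
type_synonym distr = "pl \<Rightarrow> ptype \<Rightarrow> real"
(* s i theta = mixed action of player i's type theta (only values on the support matter) *)
type_synonym strat = "pl \<Rightarrow> ptype \<Rightarrow> mixed"

definition simplex :: "mixed set" where
  "simplex = {\<sigma>. (\<forall>a. 0 \<le> \<sigma> a) \<and> (\<Sum>a\<in>UNIV. \<sigma> a) = 1}"

definition ext :: "(act \<times> act \<Rightarrow> real) \<Rightarrow> mixed \<Rightarrow> mixed \<Rightarrow> real" where
  "ext u \<sigma>1 \<sigma>2 = (\<Sum>a\<in>UNIV. \<Sum>b\<in>UNIV. \<sigma>1 a * \<sigma>2 b * u (a, b))"

(* u(sigma_i, sigma_{-i}) evaluated at the profile where player i plays own, the other opp *)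
definition evalp :: "(act \<times> act \<Rightarrow> real) \<Rightarrow> pl \<Rightarrow> mixed \<Rightarrow> mixed \<Rightarrow> real" where
  "evalp u i own opp = (if i = P1 then ext u own opp else ext u opp own)"

definition supp :: "('a \<Rightarrow> real) \<Rightarrow> 'a set" where
  "supp d = {x. d x \<noteq> 0}"

definition is_BNE :: "distr \<Rightarrow> strat \<Rightarrow> bool" where
  "is_BNE \<mu> s \<longleftrightarrow>
     (\<forall>i. \<forall>\<theta>\<in>supp (\<mu> i). s i \<theta> \<in> simplex \<and>
        (\<forall>\<sigma>\<in>simplex.
           (\<Sum>\<theta>'\<in>supp (\<mu> (other i)). \<mu> (other i) \<theta>' * evalp \<theta> i \<sigma> (s (other i) \<theta>'))
           \<le> (\<Sum>\<theta>'\<in>supp (\<mu> (other i)). \<mu> (other i) \<theta>' * evalp \<theta> i (s i \<theta>) (s (other i) \<theta>'))))"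

definition agg :: "distr \<Rightarrow> strat \<Rightarrow> pl \<Rightarrow> mixed" where
  "agg \<mu> s i = (\<lambda>a. \<Sum>\<theta>\<in>supp (\<mu> i). \<mu> i \<theta> * s i \<theta> a)"

definition avg_fit :: "(pl \<Rightarrow> act \<times> act \<Rightarrow> real) \<Rightarrow> distr \<Rightarrow> strat \<Rightarrow> pl \<Rightarrow> ptype \<Rightarrow> real" where
  "avg_fit \<pi> \<mu> s i \<theta> = evalp (\<pi> i) i (s i \<theta>) (agg \<mu> s (other i))"

definition balanced :: "(pl \<Rightarrow> act \<times> act \<Rightarrow> real) \<Rightarrow> distr \<Rightarrow> strat \<Rightarrow> bool" where
  "balanced \<pi> \<mu> s \<longleftrightarrow>
     (\<forall>i. \<forall>\<theta>\<in>supp (\<mu> i). \<forall>\<theta>'\<in>supp (\<mu> i). avg_fit \<pi> \<mu> s i \<theta> = avg_fit \<pi> \<mu> s i \<theta>')"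

(* post-entry distribution; only the values of mt and eps on J matter *)
definition postentry :: "distr \<Rightarrow> pl set \<Rightarrow> (pl \<Rightarrow> ptype) \<Rightarrow> (pl \<Rightarrow> real) \<Rightarrow> distr" where
  "postentry \<mu> J mt \<epsilon> = (\<lambda>i. if i \<in> J
       then (\<lambda>t. (1 - \<epsilon> i) * \<mu> i t + \<epsilon> i * (if t = mt i then 1 else 0))
       else \<mu> i)"

definition vnorm :: "mixed \<Rightarrow> real" where
  "vnorm v = sqrt (\<Sum>a\<in>UNIV. (v a)\<^sup>2)"

definition nearby :: "distr \<Rightarrow> distr \<Rightarrow> strat \<Rightarrow> real \<Rightarrow> strat \<Rightarrow> bool" where
  "nearby \<mu>' \<mu> s \<eta> s' \<longleftrightarrow> is_BNE \<mu>' s' \<and>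
     (\<forall>i. \<forall>\<theta>\<in>supp (\<mu> i). vnorm (\<lambda>a. s' i \<theta> a - s i \<theta> a) \<le> \<eta>)"

definition stable :: "(pl \<Rightarrow> act \<times> act \<Rightarrow> real) \<Rightarrow> distr \<Rightarrow> strat \<Rightarrow> bool" where
  "stable \<pi> \<mu> s \<longleftrightarrow> balanced \<pi> \<mu> s \<and>
    (\<forall>J mt \<eta>. J \<noteq> {} \<and> (\<forall>j\<in>J. mt j \<notin> supp (\<mu> j)) \<and> 0 < \<eta> \<longrightarrow>
      (\<exists>\<eta>b \<epsilon>b. 0 \<le> \<eta>b \<and> \<eta>b < \<eta> \<and> 0 < \<epsilon>b \<and> \<epsilon>b < 1 \<and>
        (\<forall>\<epsilon>. (\<forall>j\<in>J. 0 < \<epsilon> j \<and> \<epsilon> j < 1) \<and> Max (\<epsilon> ` J) < \<epsilon>b \<longrightarrow>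
          (\<exists>s'. nearby (postentry \<mu> J mt \<epsilon>) \<mu> s \<eta>b s') \<and>
          (\<forall>s'. nearby (postentry \<mu> J mt \<epsilon>) \<mu> s \<eta>b s' \<longrightarrow>
             (\<exists>j\<in>J. \<forall>\<theta>\<in>supp (\<mu> j).
                 avg_fit \<pi> (postentry \<mu> J mt \<epsilon>) s' j \<theta>
                 > avg_fit \<pi> (postentry \<mu> J mt \<epsilon>) s' j (mt j))
             \<or> balanced \<pi> (postentry \<mu> J mt \<epsilon>) s'))))"

(* fitness vectors: row = player 1's action, column = player 2's action *)
fun fitvec :: "act \<Rightarrow> act \<Rightarrow> real \<times> real" where
  "fitvec A1 A1 = (4, 4)" | "fitvec A1 A2 = (2, 2)" | "fitvec A1 A3 = (0, 5)"
| "fitvec A2 A1 = (2, 2)" | "fitvec A2 A2 = (4, 4)" | "fitvec A2 A3 = (0, 0)"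
| "fitvec A3 A1 = (5, 0)" | "fitvec A3 A2 = (0, 0)" | "fitvec A3 A3 = (2, 2)"

definition piG :: "pl \<Rightarrow> act \<times> act \<Rightarrow> real" where
  "piG i = (\<lambda>(r, c). if i = P1 then fst (fitvec r c) else snd (fitvec r c))"

definition theta0 :: ptype where
  "theta0 = (\<lambda>(a, b). if (a, b) = (A1, A1) \<or> (a, b) = (A2, A2) then 2
                      else if (a, b) = (A1, A2) \<or> (a, b) = (A2, A1) then 1 else 0)"

definition mu0 :: distr where
  "mu0 = (\<lambda>i t. if t = theta0 then 1 else 0)"

definition s0 :: strat where
  "s0 = (\<lambda>i t a. if a = A3 then 0 else 1/2)"

end

theory Submission
  imports Defs
begin

lemma sum_act: "(\<Sum>a\<in>UNIV. f a) = f A1 + f A2 + f A3"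
  by (simp add: UNIV_act add.assoc)

lemma all_act: "(\<forall>a. P a) \<longleftrightarrow> P A1 \<and> P A2 \<and> P A3"
  by (metis act.exhaust)

lemma simplex_iff: "\<sigma> \<in> simplex \<longleftrightarrow> 0 \<le> \<sigma> A1 \<and> 0 \<le> \<sigma> A2 \<and> 0 \<le> \<sigma> A3 \<and> \<sigma> A1 + \<sigma> A2 + \<sigma> A3 = 1"
  unfolding simplex_def by (simp add: sum_act all_act)

lemma supp_mu0: "supp (mu0 i) = {theta0}" by (auto simp: supp_def mu0_def)

lemma evalp_theta0: "evalp theta0 i \<sigma> X = \<sigma> A1*(2*X A1 + X A2) + \<sigma> A2*(X A1 + 2*X A2)"
  by (cases i) (simp_all add: evalp_def ext_def sum_act theta0_def algebra_simps)

lemma evalp_piG: "evalp (piG i) i \<sigma> X = \<sigma> A1*(4*X A1+2*X A2) + \<sigma> A2*(2*X A1+4*X A2) + \<sigma> A3*(5*X A1 + 2*X A3)"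
  by (cases i) (simp_all add: evalp_def ext_def sum_act piG_def algebra_simps)

definition dlt :: "act \<Rightarrow> mixed" where "dlt a = (\<lambda>b. if b = a then 1 else 0)"

lemma evalp_lin: "evalp u i \<sigma> X = \<sigma> A1 * evalp u i (dlt A1) X + \<sigma> A2 * evalp u i (dlt A2) X + \<sigma> A3 * evalp u i (dlt A3) X"
  by (cases i) (simp_all add: evalp_def ext_def sum_act dlt_def algebra_simps)

lemma evalp_sum: "finite S \<Longrightarrow> (\<Sum>\<theta>\<in>S. w \<theta> * evalp u i \<sigma> (f \<theta>)) = evalp u i \<sigma> (\<lambda>a. \<Sum>\<theta>\<in>S. w \<theta> * f \<theta> a)"
  by (cases i) (simp_all add: evalp_def ext_def sum_act distrib_left sum.distrib sum_distrib_left sum_distrib_right mult.assoc mult.left_commute)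

definition xe :: "real \<Rightarrow> mixed" where "xe e = (\<lambda>a. if a = A3 then e else (1 - e)/2)"

lemma s0_xe: "s0 i t = xe 0" by (auto simp: s0_def xe_def)

definition V :: "(pl \<Rightarrow> ptype) \<Rightarrow> pl \<Rightarrow> act \<Rightarrow> mixed \<Rightarrow> real" where
  "V mt i a X = evalp (mt i) i (dlt a) X"

lemma V_xe: "V mt i a (xe e) = V mt i a (xe 0) + e * (V mt i a (dlt A3) - V mt i a (xe 0))"
  by (cases i) (cases a; simp_all add: V_def evalp_def ext_def sum_act dlt_def xe_def field_simps)+

lemma opt_pure:
  assumes "\<And>a. evalp u i (dlt a) X \<le> evalp u i (dlt b) X" "\<sigma> \<in> simplex"
  shows "evalp u i \<sigma> X \<le> evalp u i (dlt b) X"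
proof -
  have s: "0 \<le> \<sigma> A1" "0 \<le> \<sigma> A2" "0 \<le> \<sigma> A3" "\<sigma> A1 + \<sigma> A2 + \<sigma> A3 = 1"
    using assms(2) by (auto simp: simplex_iff)
  have "\<sigma> A1 * evalp u i (dlt A1) X \<le> \<sigma> A1 * evalp u i (dlt b) X"
    by (rule mult_left_mono[OF assms(1) s(1)])
  moreover have "\<sigma> A2 * evalp u i (dlt A2) X \<le> \<sigma> A2 * evalp u i (dlt b) X"
    by (rule mult_left_mono[OF assms(1) s(2)])
  moreover have "\<sigma> A3 * evalp u i (dlt A3) X \<le> \<sigma> A3 * evalp u i (dlt b) X"
    by (rule mult_left_mono[OF assms(1) s(3)])
  ultimately have "evalp u i \<sigma> X \<le> (\<sigma> A1 + \<sigma> A2 + \<sigma> A3) * evalp u i (dlt b) X"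
    by (subst evalp_lin) (simp add: algebra_simps)
  then show ?thesis using s(4) by simp
qed

definition strictp :: "(pl \<Rightarrow> ptype) \<Rightarrow> pl \<Rightarrow> bool" where
  "strictp mt i \<longleftrightarrow> V mt i A1 (xe 0) < V mt i A3 (xe 0) \<and> V mt i A2 (xe 0) < V mt i A3 (xe 0)"

definition marg :: "(pl \<Rightarrow> ptype) \<Rightarrow> pl \<Rightarrow> act \<Rightarrow> real" where
  "marg mt i a = (V mt i A3 (xe 0) - V mt i a (xe 0)) /
     (\<bar>V mt i A3 (dlt A3) - V mt i A3 (xe 0)\<bar> + \<bar>V mt i a (dlt A3) - V mt i a (xe 0)\<bar> + 1)"

definition epsm :: "(pl \<Rightarrow> ptype) \<Rightarrow> pl \<Rightarrow> real" where
  "epsm mt i = (if strictp mt i then min (marg mt i A1) (marg mt i A2) else 1)"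

lemma epsm_pos: "0 < epsm mt i"
  by (auto simp: epsm_def strictp_def marg_def add_pos_nonneg)

lemma marg_robust:
  assumes "V mt i a (xe 0) < V mt i A3 (xe 0)" "0 \<le> e" "e < marg mt i a"
  shows "V mt i a (xe e) < V mt i A3 (xe e)"
proof -
  define D where "D = V mt i A3 (xe 0) - V mt i a (xe 0)"
  define d3 where "d3 = V mt i A3 (dlt A3) - V mt i A3 (xe 0)"
  define da where "da = V mt i a (dlt A3) - V mt i a (xe 0)"
  have C: "0 < \<bar>d3\<bar> + \<bar>da\<bar> + 1" by (simp add: add_pos_nonneg)
  have D: "0 < D" using assms(1) D_def by simp
  have "e < D / (\<bar>d3\<bar> + \<bar>da\<bar> + 1)" using assms(3) by (simp add: marg_def D_def d3_def da_def)
  hence e1: "e * (\<bar>d3\<bar> + \<bar>da\<bar> + 1) < D" using C by (simp add: pos_less_divide_eq)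
  have "- (e * (\<bar>d3\<bar> + \<bar>da\<bar>)) \<le> e * (d3 - da)"
  proof -
    have "-(\<bar>d3\<bar> + \<bar>da\<bar>) \<le> d3 - da" by linarith
    from mult_left_mono[OF this assms(2)] show ?thesis by (simp add: algebra_simps)
  qed
  hence "0 < D + e * (d3 - da)" using e1 assms(2) by (simp add: algebra_simps)
  moreover have "V mt i A3 (xe e) - V mt i a (xe e) = D + e * (d3 - da)"
    by (subst V_xe, subst (2) V_xe) (simp add: D_def d3_def da_def algebra_simps)
  ultimately show ?thesis by simp
qed

lemma strict_robust:
  assumes "strictp mt i" "0 \<le> e" "e < epsm mt i"
  shows "V mt i a (xe e) \<le> V mt i A3 (xe e)"
proof -
  have "V mt i A1 (xe e) < V mt i A3 (xe e)"
    using marg_robust[of mt i A1 e] assms by (auto simp: strictp_def epsm_def)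
  moreover have "V mt i A2 (xe e) < V mt i A3 (xe e)"
    using marg_robust[of mt i A2 e] assms by (auto simp: strictp_def epsm_def)
  ultimately show ?thesis by (cases a) auto
qed

definition br :: "(pl \<Rightarrow> ptype) \<Rightarrow> pl \<Rightarrow> mixed \<Rightarrow> act" where
  "br mt i X = (if V mt i A2 X \<le> V mt i A1 X \<and> V mt i A3 X \<le> V mt i A1 X then A1
     else if V mt i A3 X \<le> V mt i A2 X then A2 else A3)"

lemma br_opt: "V mt i a X \<le> V mt i (br mt i X) X"
  by (cases a) (auto simp: br_def)

lemma br_nonstrict: "\<not> strictp mt i \<Longrightarrow> br mt i (xe 0) \<noteq> A3"
  by (auto simp: br_def strictp_def)

definition adj :: "real \<Rightarrow> act \<Rightarrow> mixed" where
  "adj e a = (case a of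
      A1 \<Rightarrow> (\<lambda>b. if b = A1 then 1/2 - e/(2*(1-e)) else if b = A2 then 1/2 + e/(2*(1-e)) else 0)
    | A2 \<Rightarrow> (\<lambda>b. if b = A1 then 1/2 + e/(2*(1-e)) else if b = A2 then 1/2 - e/(2*(1-e)) else 0)
    | A3 \<Rightarrow> xe 0)"

lemma adj_agg: "e < 1 \<Longrightarrow> (1 - e) * adj e a b + e * dlt a b = (if a = A3 then xe e b else xe 0 b)"
  by (cases a; cases b) (simp_all add: adj_def dlt_def xe_def field_simps)

lemma adj_simplex: "0 \<le> e \<Longrightarrow> e \<le> 1/2 \<Longrightarrow> adj e a \<in> simplex"
proof -
  assume e: "0 \<le> e" "e \<le> 1/2"
  have "e/(2*(1-e)) \<le> 1/2" using e by (simp add: field_simps)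
  moreover have "0 \<le> e/(2*(1-e))" using e by simp
  ultimately show ?thesis by (cases a) (auto simp: adj_def simplex_iff xe_def)
qed

lemma adj_sum: "adj e a A1 + adj e a A2 = 1" "adj e a A3 = 0"
  by (cases a; simp add: adj_def xe_def)+

lemma vnorm_le: "0 \<le> y \<Longrightarrow> (v A1)^2 + (v A2)^2 + (v A3)^2 \<le> y^2 \<Longrightarrow> vnorm v \<le> y"
  unfolding vnorm_def sum_act by (metis real_sqrt_le_mono real_sqrt_abs abs_of_nonneg)

lemma comp_le_vnorm: "\<bar>v a\<bar> \<le> vnorm v"
proof -
  have "(v a)^2 \<le> (v A1)^2 + (v A2)^2 + (v A3)^2" by (cases a) auto
  hence "sqrt ((v a)^2) \<le> vnorm v" unfolding vnorm_def sum_act by (rule real_sqrt_le_mono)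
  thus ?thesis by simp
qed

lemma adj_near:
  assumes "0 \<le> e" "e \<le> 1/2" "4 * e \<le> h"
  shows "vnorm (\<lambda>b. adj e a b - xe 0 b) \<le> h"
proof -
  define d where "d = e/(2*(1-e))"
  have d0: "0 \<le> d" using assms by (simp add: d_def)
  have "e * (e * 2) \<le> e * 1" using assms by (intro mult_left_mono) auto
  hence "d \<le> e" using assms unfolding d_def by (simp add: field_simps)
  hence "d^2 \<le> e^2" using d0 by (simp add: power_mono)
  moreover have "e^2 \<le> (h/4)^2" using assms by (simp add: power_mono)
  ultimately have "2 * d^2 \<le> h^2" by (simp add: power_divide) (smt (verit) zero_le_power2)
  hence "(adj e a A1 - xe 0 A1)^2 + (adj e a A2 - xe 0 A2)^2 + (adj e a A3 - xe 0 A3)^2 \<le> h^2"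
  proof -
    have "(adj e a A1 - xe 0 A1)^2 + (adj e a A2 - xe 0 A2)^2 + (adj e a A3 - xe 0 A3)^2 \<le> 2 * d^2"
      by (cases a) (simp_all add: adj_def xe_def d_def)
    with \<open>2 * d^2 \<le> h^2\<close> show ?thesis by linarith
  qed
  thus ?thesis using assms by (intro vnorm_le) auto
qed

lemma BNE_iff:
  assumes "\<And>i. finite (supp (\<mu> i))"
  shows "is_BNE \<mu> s \<longleftrightarrow> (\<forall>i. \<forall>\<theta>\<in>supp (\<mu> i). s i \<theta> \<in> simplex \<and>
     (\<forall>\<sigma>\<in>simplex. evalp \<theta> i \<sigma> (agg \<mu> s (other i)) \<le> evalp \<theta> i (s i \<theta>) (agg \<mu> s (other i))))"
  unfolding is_BNE_def agg_def by (simp add: evalp_sum assms)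

definition okp :: "pl set \<Rightarrow> (pl \<Rightarrow> ptype) \<Rightarrow> (pl \<Rightarrow> real) \<Rightarrow> bool" where
  "okp J mt \<epsilon> \<longleftrightarrow> (\<forall>j\<in>J. mt j \<noteq> theta0 \<and> 0 < \<epsilon> j \<and> \<epsilon> j < 1)"

lemma pe_out: "i \<notin> J \<Longrightarrow> postentry mu0 J mt \<epsilon> i = mu0 i"
  by (simp add: postentry_def)

lemma pe_in:
  assumes "okp J mt \<epsilon>" "i \<in> J"
  shows "supp (postentry mu0 J mt \<epsilon> i) = {theta0, mt i}"
    "postentry mu0 J mt \<epsilon> i theta0 = 1 - \<epsilon> i"
    "postentry mu0 J mt \<epsilon> i (mt i) = \<epsilon> i"
  using assms by (auto simp: postentry_def okp_def supp_def mu0_def)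

lemma pe_supp:
  assumes "okp J mt \<epsilon>"
  shows "supp (postentry mu0 J mt \<epsilon> i) = (if i \<in> J then {theta0, mt i} else {theta0})"
  using pe_in[OF assms] pe_out[of i J] supp_mu0 by auto

lemma pe_finite: "okp J mt \<epsilon> \<Longrightarrow> finite (supp (postentry mu0 J mt \<epsilon> i))"
  by (simp add: pe_supp)

lemma agg_pe:
  assumes "okp J mt \<epsilon>"
  shows "agg (postentry mu0 J mt \<epsilon>) s i =
    (if i \<in> J then (\<lambda>a. (1 - \<epsilon> i) * s i theta0 a + \<epsilon> i * s i (mt i) a) else s i theta0)"
proof (cases "i \<in> J")
  case True
  have ne: "mt i \<noteq> theta0" using assms True by (simp add: okp_def)
  show ?thesis using True ne pe_in[OF assms True]
    by (auto simp: agg_def)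
next
  case False
  then show ?thesis unfolding agg_def by (simp add: pe_out supp_mu0) (simp add: mu0_def)
qed

lemma xe_simplex: "0 \<le> e \<Longrightarrow> e \<le> 1 \<Longrightarrow> xe e \<in> simplex"
  by (simp add: simplex_iff xe_def)

lemma dlt_simplex: "dlt a \<in> simplex"
  by (cases a) (simp_all add: simplex_iff dlt_def)

lemma resident_opt:
  assumes "\<sigma> \<in> simplex" "r A1 + r A2 = 1" "0 \<le> e" "e \<le> 1"
  shows "evalp theta0 i \<sigma> (xe e) \<le> evalp theta0 i r (xe e)"
proof -
  have s: "\<sigma> A1 + \<sigma> A2 \<le> 1" using assms(1) by (simp add: simplex_iff)
  have c: "0 \<le> 3 * (1 - e) / 2" using assms by simp
  have "(\<sigma> A1 + \<sigma> A2) * (3 * (1 - e) / 2) \<le> 1 * (3 * (1 - e) / 2)"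
    by (rule mult_right_mono[OF s c])
  moreover have "evalp theta0 i \<sigma> (xe e) = (\<sigma> A1 + \<sigma> A2) * (3 * (1 - e) / 2)"
    by (simp add: evalp_theta0 xe_def field_simps)
  moreover have "evalp theta0 i r (xe e) = (r A1 + r A2) * (3 * (1 - e) / 2)"
    by (simp add: evalp_theta0 xe_def field_simps)
  ultimately show ?thesis using assms(2) by simp
qed

lemma exist_nearby:
  assumes ok: "okp J mt \<epsilon>" and small: "\<forall>j\<in>J. \<epsilon> j \<le> 1/20 \<and> 4 * \<epsilon> j \<le> h \<and> (\<forall>i. \<epsilon> j < epsm mt i)"
    and h: "0 \<le> h"
  shows "\<exists>s'. nearby (postentry mu0 J mt \<epsilon>) mu0 s0 h s'"
proof -
  define \<mu>' where "\<mu>' = postentry mu0 J mt \<epsilon>"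
  define Xf where "Xf j = (if j \<in> J \<and> strictp mt j then xe (\<epsilon> j) else xe 0)" for j
  define ac where "ac i = (if strictp mt i then A3 else br mt i (Xf (other i)))" for i
  define res where "res i = (if i \<in> J then adj (\<epsilon> i) (ac i) else xe 0)" for i
  define s' where "s' i \<theta> = (if \<theta> = theta0 then res i else dlt (ac i))" for i \<theta>
  have eps: "\<And>j. j \<in> J \<Longrightarrow> 0 < \<epsilon> j \<and> \<epsilon> j < 1 \<and> mt j \<noteq> theta0" using ok by (auto simp: okp_def)
  have aggs: "agg \<mu>' s' i = (if i \<in> J \<and> ac i = A3 then xe (\<epsilon> i) else xe 0)" for i
  proof (cases "i \<in> J")
    case True
    with eps have "\<epsilon> i < 1" "mt i \<noteq> theta0" by auto
    then show ?thesis using True unfolding \<mu>'_def agg_pe[OF ok]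
      by (auto simp: s'_def res_def adj_agg)
  next
    case False
    then show ?thesis unfolding \<mu>'_def agg_pe[OF ok] by (auto simp: s'_def res_def)
  qed
  have K1: "\<exists>e. agg \<mu>' s' i = xe e \<and> 0 \<le> e \<and> e \<le> 1/20 \<and> (\<forall>k. e < epsm mt k)" for i
  proof (cases "i \<in> J \<and> ac i = A3")
    case True
    then show ?thesis using aggs[of i] small eps[of i] by auto
  next
    case False
    then show ?thesis using aggs[of i] epsm_pos by auto
  qed
  have K2: "agg \<mu>' s' (other i) = Xf (other i)" if "\<not> strictp mt i" for i
  proof -
    define j where "j = other i"
    have oj: "other j = i" by (cases i) (simp_all add: j_def)
    show ?thesis unfolding j_def[symmetric]
    proof (cases "j \<in> J")
      case False then show "agg \<mu>' s' j = Xf j" by (simp add: aggs Xf_def)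
    next
      case True
      show "agg \<mu>' s' j = Xf j"
      proof (cases "strictp mt j")
        case True with \<open>j \<in> J\<close> show ?thesis by (simp add: aggs Xf_def ac_def)
      next
        case False
        have "Xf i = xe 0" using that by (simp add: Xf_def)
        hence "ac j \<noteq> A3" using False br_nonstrict[OF False] by (simp add: ac_def oj)
        then show ?thesis using False by (simp add: aggs Xf_def)
      qed
    qed
  qed
  have BNE: "is_BNE \<mu>' s'"
    unfolding BNE_iff[of \<mu>', OF pe_finite[OF ok, unfolded \<mu>'_def[symmetric]]]
  proof (intro allI ballI)
    fix i \<theta> assume th: "\<theta> \<in> supp (\<mu>' i)"
    hence cases: "\<theta> = theta0 \<or> (i \<in> J \<and> \<theta> = mt i)"
      unfolding \<mu>'_def pe_supp[OF ok] by (auto split: if_splits)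
    obtain e where e: "agg \<mu>' s' (other i) = xe e" "0 \<le> e" "e \<le> 1/20" "\<forall>k. e < epsm mt k"
      using K1 by blast
    show "s' i \<theta> \<in> simplex \<and>
        (\<forall>\<sigma>\<in>simplex. evalp \<theta> i \<sigma> (agg \<mu>' s' (other i)) \<le> evalp \<theta> i (s' i \<theta>) (agg \<mu>' s' (other i)))"
    proof (cases "\<theta> = theta0")
      case True
      have "res i \<in> simplex" using eps[of i] small
        by (auto simp: res_def intro!: adj_simplex xe_simplex)
      moreover have "res i A1 + res i A2 = 1" by (simp add: res_def adj_sum xe_def)
      ultimately show ?thesis using True e resident_opt by (simp add: s'_def)
    next
      case False
      with cases have iJ: "i \<in> J" "\<theta> = mt i" by auto
      have s'm: "s' i \<theta> = dlt (ac i)" using False by (simp add: s'_def)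
      have "V mt i a (agg \<mu>' s' (other i)) \<le> V mt i (ac i) (agg \<mu>' s' (other i))" for a
      proof (cases "strictp mt i")
        case True
        then show ?thesis using strict_robust[OF True e(2)] e by (simp add: ac_def)
      next
        case False
        then show ?thesis using K2[OF False] br_opt by (simp add: ac_def)
      qed
      hence "\<forall>\<sigma>\<in>simplex. evalp \<theta> i \<sigma> (agg \<mu>' s' (other i)) \<le> evalp \<theta> i (dlt (ac i)) (agg \<mu>' s' (other i))"
        using opt_pure iJ by (auto simp: V_def)
      then show ?thesis using s'm dlt_simplex by simp
    qed
  qed
  have near: "vnorm (\<lambda>a. s' i theta0 a - s0 i theta0 a) \<le> h" for i
  proof (cases "i \<in> J")
    case True
    have "\<epsilon> i \<le> 1/2" "4 * \<epsilon> i \<le> h" "0 \<le> \<epsilon> i" using small eps[of i] True by auto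
    then show ?thesis using adj_near[of "\<epsilon> i" h "ac i"] True
      by (simp add: s'_def res_def s0_xe)
  next
    case False
    then show ?thesis using h by (simp add: s'_def res_def s0_xe vnorm_le)
  qed
  have "nearby \<mu>' mu0 s0 h s'"
    unfolding nearby_def using BNE near by (simp add: supp_mu0)
  then show ?thesis unfolding \<mu>'_def by blast
qed

lemma arith1:
  fixes r1 r2 r3 x1 x2 x3 :: real
  assumes "0 < r1" "0 < r2" "0 \<le> r3" "r1 + r2 + r3 = 1" "0 \<le> x1" "0 \<le> x2" "x3 \<le> 1/10"
    "x1 + x2 + x3 = 1"
    "2*x1+x2 \<le> r1*(2*x1+x2) + r2*(x1+2*x2)" "x1+2*x2 \<le> r1*(2*x1+x2) + r2*(x1+2*x2)"
  shows "x1 = x2 \<and> r3 = 0"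
proof -
  define \<alpha> where "\<alpha> = 2*x1+x2"
  define \<beta> where "\<beta> = x1+2*x2"
  have a0: "0 \<le> \<alpha>" "0 \<le> \<beta>" using assms by (auto simp: \<alpha>_def \<beta>_def)
  have le1: "r1 + r2 \<le> 1" using assms by linarith
  have "\<not> \<alpha> > \<beta>"
  proof
    assume g: "\<alpha> > \<beta>"
    have "r2 * \<beta> < r2 * \<alpha>" using g assms(2) by simp
    moreover have "(r1 + r2) * \<alpha> \<le> 1 * \<alpha>" using le1 a0 by (intro mult_right_mono) auto
    ultimately show False using assms(9) unfolding \<alpha>_def[symmetric] \<beta>_def[symmetric]
      by (simp add: algebra_simps)
  qed
  moreover have "\<not> \<beta> > \<alpha>"
  proof
    assume g: "\<beta> > \<alpha>"
    have "r1 * \<alpha> < r1 * \<beta>" using g assms(1) by simp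
    moreover have "(r1 + r2) * \<beta> \<le> 1 * \<beta>" using le1 a0 by (intro mult_right_mono) auto
    ultimately show False using assms(10) unfolding \<alpha>_def[symmetric] \<beta>_def[symmetric]
      by (simp add: algebra_simps)
  qed
  ultimately have eq: "\<alpha> = \<beta>" by simp
  hence x: "x1 = x2" by (simp add: \<alpha>_def \<beta>_def)
  have ap: "0 < \<alpha>" using assms x by (simp add: \<alpha>_def)
  have "1 * \<alpha> \<le> (r1 + r2) * \<alpha>" using assms(9) eq unfolding \<alpha>_def[symmetric] \<beta>_def[symmetric]
    by (simp add: algebra_simps)
  hence "1 \<le> r1 + r2" using ap by (simp only: mult_le_cancel_right)
  thus ?thesis using x assms by linarith
qed

lemma fit_formula:
  assumes "\<sigma> \<in> simplex" "X A1 = X A2" "X A1 + X A2 + X A3 = 1"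
  shows "evalp (piG i) i \<sigma> X = 6 * X A1 - \<sigma> A3 * (5 * X A1 - 2)"
proof -
  have e1: "\<sigma> A1 = 1 - \<sigma> A2 - \<sigma> A3" using assms by (auto simp: simplex_iff)
  have e2: "X A3 = 1 - 2 * X A2" using assms by auto
  show ?thesis apply (simp only: evalp_piG e1 e2 assms(2)) by (simp add: algebra_simps)
qed

lemma every_nearby:
  assumes ok: "okp J mt \<epsilon>" and small: "\<forall>j\<in>J. \<epsilon> j \<le> 1/20"
    and h: "0 \<le> h" "h \<le> 1/20"
    and nb: "nearby (postentry mu0 J mt \<epsilon>) mu0 s0 h s'"
  shows "(\<exists>j\<in>J. \<forall>\<theta>\<in>supp (mu0 j).
                 avg_fit piG (postentry mu0 J mt \<epsilon>) s' j \<theta>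
                 > avg_fit piG (postentry mu0 J mt \<epsilon>) s' j (mt j))
             \<or> balanced piG (postentry mu0 J mt \<epsilon>) s'"
proof -
  define \<mu>' where "\<mu>' = postentry mu0 J mt \<epsilon>"
  define X where "X = agg \<mu>' s'"
  have eps: "\<And>j. j \<in> J \<Longrightarrow> 0 < \<epsilon> j \<and> \<epsilon> j < 1 \<and> mt j \<noteq> theta0" using ok by (auto simp: okp_def)
  have BNE: "is_BNE \<mu>' s'" and near: "\<And>i. vnorm (\<lambda>a. s' i theta0 a - s0 i theta0 a) \<le> h"
    using nb by (auto simp: nearby_def \<mu>'_def supp_mu0)
  have B: "\<forall>i. \<forall>\<theta>\<in>supp (\<mu>' i). s' i \<theta> \<in> simplex \<and>
     (\<forall>\<sigma>\<in>simplex. evalp \<theta> i \<sigma> (X (other i)) \<le> evalp \<theta> i (s' i \<theta>) (X (other i)))"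
    using BNE unfolding X_def BNE_iff[of \<mu>', OF pe_finite[OF ok, unfolded \<mu>'_def[symmetric]]] .
  have suppi: "supp (\<mu>' i) = (if i \<in> J then {theta0, mt i} else {theta0})" for i
    unfolding \<mu>'_def by (rule pe_supp[OF ok])
  have rS: "s' i theta0 \<in> simplex" for i using B suppi[of i] by auto
  have rO: "\<forall>\<sigma>\<in>simplex. evalp theta0 i \<sigma> (X (other i)) \<le> evalp theta0 i (s' i theta0) (X (other i))" for i
    using B suppi[of i] by auto
  have mS: "i \<in> J \<Longrightarrow> s' i (mt i) \<in> simplex" for i using B suppi[of i] by auto
  have rn: "\<bar>s' i theta0 a - xe 0 a\<bar> \<le> h" for i a
    using comp_le_vnorm[of "\<lambda>a. s' i theta0 a - s0 i theta0 a" a] near[of i] by (simp add: s0_xe)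
  have r12: "s' i theta0 A1 > 0" "s' i theta0 A2 > 0" "s' i theta0 A3 \<le> h" for i
    using rn[of i A1] rn[of i A2] rn[of i A3] h by (auto simp: xe_def)
  have Xf: "0 \<le> X j A1 \<and> 0 \<le> X j A2 \<and> X j A3 \<le> 1/10 \<and> X j A1 + X j A2 + X j A3 = 1" for j
  proof (cases "j \<in> J")
    case True
    have e: "0 < \<epsilon> j" "\<epsilon> j \<le> 1/20" "\<epsilon> j < 1" using eps[OF True] small True by auto
    have X: "X j = (\<lambda>a. (1 - \<epsilon> j) * s' j theta0 a + \<epsilon> j * s' j (mt j) a)"
      using True unfolding X_def \<mu>'_def agg_pe[OF ok] by simp
    have r: "0 \<le> s' j theta0 A1" "0 \<le> s' j theta0 A2" "s' j theta0 A3 \<le> h"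
      "s' j theta0 A1 + s' j theta0 A2 + s' j theta0 A3 = 1" using rS[of j] r12[of j] by (auto simp: simplex_iff)
    have m: "0 \<le> s' j (mt j) A1" "0 \<le> s' j (mt j) A2" "s' j (mt j) A3 \<le> 1"
      "s' j (mt j) A1 + s' j (mt j) A2 + s' j (mt j) A3 = 1" using mS[OF True] by (auto simp: simplex_iff)
    have f1: "(1 - \<epsilon> j) * s' j theta0 A3 \<le> 1 * h"
      using r(3) h e rS[of j] by (intro mult_mono) (auto simp: simplex_iff)
    moreover have f2: "\<epsilon> j * s' j (mt j) A3 \<le> \<epsilon> j * 1" using m(3) e by (intro mult_left_mono) auto
    moreover have "0 \<le> X j A1" "0 \<le> X j A2" using X r m e by simp_all
    moreover have f3: "X j A3 = (1 - \<epsilon> j) * s' j theta0 A3 + \<epsilon> j * s' j (mt j) A3" using X by simp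
    moreover have "X j A3 \<le> 1/10" using f1 f2 f3 e h by linarith
    moreover have "(1 - \<epsilon> j) * s' j theta0 A1 + \<epsilon> j * s' j (mt j) A1 + ((1 - \<epsilon> j) * s' j theta0 A2 + \<epsilon> j * s' j (mt j) A2)
        + ((1 - \<epsilon> j) * s' j theta0 A3 + \<epsilon> j * s' j (mt j) A3) = 1"
      using r(4) m(4) by (simp add: algebra_simps) (metis distrib_left mult_1_right add.assoc)
    ultimately show ?thesis using X e h by simp
  next
    case False
    have X: "X j = s' j theta0"
      using False unfolding X_def \<mu>'_def agg_pe[OF ok] by simp
    then show ?thesis using rS[of j] r12[of j] h by (auto simp: simplex_iff)
  qed
  have key: "X (other i) A1 = X (other i) A2 \<and> s' i theta0 A3 = 0" for i
  proof -
    have a1: "evalp theta0 i (dlt A1) (X (other i)) \<le> evalp theta0 i (s' i theta0) (X (other i))"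
      using rO[of i] dlt_simplex by blast
    have a2: "evalp theta0 i (dlt A2) (X (other i)) \<le> evalp theta0 i (s' i theta0) (X (other i))"
      using rO[of i] dlt_simplex by blast
    show ?thesis
      apply (rule arith1[of "s' i theta0 A1" "s' i theta0 A2" "s' i theta0 A3" "X (other i) A1" "X (other i) A2" "X (other i) A3"])
      using r12[of i] rS[of i] Xf[of "other i"] a1 a2 by (auto simp: simplex_iff evalp_theta0 dlt_def)
  qed
  have oo: "other (other i) = i" for i by (cases i) auto
  have Xeq: "X j A1 = X j A2" for j using key[of "other j"] by (simp add: oo)
  have t: "X j A1 \<ge> 9/20" for j using Xf[of j] Xeq[of j] by linarith
  have fit: "avg_fit piG \<mu>' s' i \<theta> = 6 * X (other i) A1 - s' i \<theta> A3 * (5 * X (other i) A1 - 2)"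
    if "\<theta> \<in> supp (\<mu>' i)" for i \<theta>
    unfolding avg_fit_def X_def[symmetric]
    using B that Xeq Xf by (intro fit_formula) auto
  show ?thesis
  proof (cases "\<exists>j\<in>J. s' j (mt j) A3 > 0")
    case True
    then obtain j where j: "j \<in> J" "s' j (mt j) A3 > 0" by blast
    have pos: "5 * X (other j) A1 - 2 > 0" using t[of "other j"] by simp
    have "avg_fit piG \<mu>' s' j theta0 = 6 * X (other j) A1"
      using fit[of theta0 j] key[of j] suppi[of j] by auto
    moreover have "avg_fit piG \<mu>' s' j (mt j) < 6 * X (other j) A1"
      using fit[of "mt j" j] suppi[of j] j pos by simp
    ultimately have "avg_fit piG \<mu>' s' j (mt j) < avg_fit piG \<mu>' s' j theta0" by simp
    then show ?thesis using j unfolding \<mu>'_def supp_mu0 by auto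
  next
    case False
    have z: "\<theta> \<in> supp (\<mu>' i) \<Longrightarrow> s' i \<theta> A3 = 0" for i \<theta>
    proof -
      assume th: "\<theta> \<in> supp (\<mu>' i)"
      show ?thesis
      proof (cases "\<theta> = theta0")
        case True then show ?thesis using key[of i] by simp
      next
        case False
        with th suppi[of i] have "i \<in> J" "\<theta> = mt i" by (auto split: if_splits)
        then show ?thesis using False \<open>\<not> (\<exists>j\<in>J. s' j (mt j) A3 > 0)\<close> mS[of i]
          by (force simp: simplex_iff)
      qed
    qed
    have "balanced piG \<mu>' s'"
      unfolding balanced_def using fit z by simp
    then show ?thesis unfolding \<mu>'_def by simp
  qed
qed

lemma fin0: "finite (supp (mu0 i))" by (simp add: supp_mu0)

lemma agg_mu0: "agg mu0 s0 j = xe 0"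
  unfolding agg_def supp_mu0 by (simp add: mu0_def s0_xe)

theorem mainTheorem13:
  shows "is_BNE mu0 s0 \<and> stable piG mu0 s0"
proof
  show "is_BNE mu0 s0"
    unfolding BNE_iff[of mu0, OF fin0]
    using resident_opt[of _ "xe 0" 0] xe_simplex[of 0]
    by (simp add: supp_mu0 agg_mu0 s0_xe) (simp add: xe_def)
  show "stable piG mu0 s0"
    unfolding stable_def
  proof (intro conjI allI impI)
    show "balanced piG mu0 s0" by (simp add: balanced_def supp_mu0)
    fix J mt and \<eta> :: real
    assume a: "J \<noteq> {} \<and> (\<forall>j\<in>J. mt j \<notin> supp (mu0 j)) \<and> 0 < \<eta>"
    define \<eta>b where "\<eta>b = min (\<eta>/2) (1/20::real)"
    define \<epsilon>b where "\<epsilon>b = min (1/20) (min (\<eta>b/4) (min (epsm mt P1) (epsm mt P2)))"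
    have hb: "0 \<le> \<eta>b" "\<eta>b < \<eta>" "\<eta>b \<le> 1/20" using a by (auto simp: \<eta>b_def)
    have eb: "0 < \<epsilon>b" "\<epsilon>b < 1" using hb a epsm_pos[of mt P1] epsm_pos[of mt P2]
      by (auto simp: \<epsilon>b_def \<eta>b_def)
    show "\<exists>\<eta>b \<epsilon>b. 0 \<le> \<eta>b \<and> \<eta>b < \<eta> \<and> 0 < \<epsilon>b \<and> \<epsilon>b < 1 \<and>
        (\<forall>\<epsilon>. (\<forall>j\<in>J. 0 < \<epsilon> j \<and> \<epsilon> j < 1) \<and> Max (\<epsilon> ` J) < \<epsilon>b \<longrightarrow>
          (\<exists>s'. nearby (postentry mu0 J mt \<epsilon>) mu0 s0 \<eta>b s') \<and>
          (\<forall>s'. nearby (postentry mu0 J mt \<epsilon>) mu0 s0 \<eta>b s' \<longrightarrow>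
             (\<exists>j\<in>J. \<forall>\<theta>\<in>supp (mu0 j).
                 avg_fit piG (postentry mu0 J mt \<epsilon>) s' j \<theta>
                 > avg_fit piG (postentry mu0 J mt \<epsilon>) s' j (mt j))
             \<or> balanced piG (postentry mu0 J mt \<epsilon>) s'))"
    proof (rule exI[of _ \<eta>b], rule exI[of _ \<epsilon>b], intro conjI allI impI)
      show "0 \<le> \<eta>b" "\<eta>b < \<eta>" "0 < \<epsilon>b" "\<epsilon>b < 1" using hb eb by auto
      fix \<epsilon> :: "pl \<Rightarrow> real"
      assume e: "(\<forall>j\<in>J. 0 < \<epsilon> j \<and> \<epsilon> j < 1) \<and> Max (\<epsilon> ` J) < \<epsilon>b"
      have fin: "finite (\<epsilon> ` J)" by (rule finite_imageI[OF finite_subset[OF subset_UNIV finite_UNIV]])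
      have lt: "\<forall>j\<in>J. \<epsilon> j < \<epsilon>b" using e a Max_less_iff[OF fin] by auto
      have ok: "okp J mt \<epsilon>" using a e by (auto simp: okp_def supp_mu0)
      have ep: "\<epsilon>b \<le> epsm mt i" for i by (cases i) (auto simp: \<epsilon>b_def)
      have small: "\<forall>j\<in>J. \<epsilon> j \<le> 1/20 \<and> 4 * \<epsilon> j \<le> \<eta>b \<and> (\<forall>i. \<epsilon> j < epsm mt i)"
      proof (intro ballI conjI allI)
        fix j assume j: "j \<in> J"
        show "\<epsilon> j \<le> 1/20" "4 * \<epsilon> j \<le> \<eta>b" using lt j by (auto simp: \<epsilon>b_def)
        fix i show "\<epsilon> j < epsm mt i" using lt j ep[of i] by force
      qed
      show "\<exists>s'. nearby (postentry mu0 J mt \<epsilon>) mu0 s0 \<eta>b s'"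
        by (rule exist_nearby[OF ok small hb(1)])
      fix s' assume "nearby (postentry mu0 J mt \<epsilon>) mu0 s0 \<eta>b s'"
      then show "(\<exists>j\<in>J. \<forall>\<theta>\<in>supp (mu0 j).
                 avg_fit piG (postentry mu0 J mt \<epsilon>) s' j \<theta>
                 > avg_fit piG (postentry mu0 J mt \<epsilon>) s' j (mt j))
             \<or> balanced piG (postentry mu0 J mt \<epsilon>) s'"
        using every_nearby[OF ok _ hb(1) hb(3)] small by blast
    qed
  qed
qed

end
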